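(* For every set $J\subset\mathbb{Z}^+$, every integer $s\geqslant1$ and every $0<p<1$, $h_J(s,p)\leqslant h_J^0(s,p)$, where \[ h_J^0(s,p)=\frac{(1-p)^s}{p^2}\left(\frac{p^2}{(1-p)^{s+1}}+\frac{p}{s}\frac{1}{(1-p)^s}-\sum_{k\in J}k\frac{(k+s-2)!}{(k-1)!\,s!}p^k\right). \]
   Context: $\mathbb{Z}^+$ is the set of positive integers. For $J\subset\mathbb{Z}^+$, $s\in\mathbb{Z}^+$, $0<p<1$: $h_J(s,p)=\frac{(1-p)^s}{p^2}\sum_{k\in\mathbb{Z}^+\setminus J}\frac{k^2}{(k+s)^2}\binom{k+s}{k}p^k$. *)

theory Defs
  imports "HOL-Analysis.Analysis"
begin

text \<open>Positive integers are modelled as naturals k with k \<ge> 1; a set J of positive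
integers is a nat set with J \<subseteq> {1..}. Infinite sums are unordered sums (infsum).\<close>

definition h_J :: "nat set \<Rightarrow> nat \<Rightarrow> real \<Rightarrow> real" where
  "h_J J s p = (1 - p) ^ s / p\<^sup>2 *
     (\<Sum>\<^sub>\<infinity>k\<in>{1..} - J. (real k)\<^sup>2 / (real (k + s))\<^sup>2 * real ((k + s) choose k) * p ^ k)"

definition h0_J :: "nat set \<Rightarrow> nat \<Rightarrow> real \<Rightarrow> real" where
  "h0_J J s p = (1 - p) ^ s / p\<^sup>2 *
     (p\<^sup>2 / (1 - p) ^ (s + 1) + p / real s * (1 / (1 - p) ^ s)
      - (\<Sum>\<^sub>\<infinity>k\<in>J. real k * fact (k + s - 2) / (fact (k - 1) * fact s) * p ^ k))"

end

theory Submission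
  imports Defs
begin

lemma NB:
  fixes x :: real and m :: nat
  assumes "0 \<le> x" "x < 1"
  shows "(\<lambda>j. fact (j + m) / (fact j * fact m) * x ^ j) sums (1 / (1 - x) ^ (m + 1))"
proof -
  have "\<bar>-x\<bar> < 1" using assms by simp
  from gen_binomial_real[OF this, of "- real (m + 1)"]
  have S: "(\<lambda>n. (- real (m + 1) gchoose n) * (- x) ^ n) sums (1 + - x) powr (- real (m + 1))" .
  have e: "(- real (m + 1) gchoose n) * (- x) ^ n = fact (n + m) / (fact n * fact m) * x ^ n" for n
  proof -
    have "(- real (m + 1) gchoose n) = (-1) ^ n * ((real (m + 1) + real n - 1) gchoose n)"
      by (rule gbinomial_minus)
    also have "real (m + 1) + real n - 1 = real (n + m)" by simp
    also have "(real (n + m) gchoose n) = real ((n + m) choose n)" by (simp add: binomial_gbinomial)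
    also have "real ((n + m) choose n) = fact (n + m) / (fact n * fact m)"
      by (subst binomial_fact) auto
    finally show ?thesis by (simp add: power_minus_mult power_mult_distrib[symmetric] 
        flip: power_mult_distrib)
  qed
  have q: "(1 - x) powr real (m + 1) = (1 - x) ^ (m + 1)"
    by (rule powr_realpow) (use assms in simp)
  have r: "(1 + - x) powr (- real (m + 1)) = 1 / (1 - x) ^ (m + 1)"
    using powr_minus[of "1 - x" "real (m + 1)"] q by (simp add: divide_inverse)
  show ?thesis using S unfolding e r .
qed

theorem lemma3:
  fixes J :: "nat set" and s :: nat and p :: real
  assumes "J \<subseteq> {1..}" and "s \<ge> 1" and "0 < p" and "p < 1"
  shows "h_J J s p \<le> h0_J J s p"
proof -
  obtain r where sr: "s = Suc r" using assms(2) by (cases s) auto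
  define a where "a = (\<lambda>k::nat. (real k)\<^sup>2 / (real (k + s))\<^sup>2 * real ((k + s) choose k) * p ^ k)"
  define b where "b = (\<lambda>k::nat. real k * fact (k + s - 2) / (fact (k - 1) * fact s) * p ^ k)"
  define T where "T = p\<^sup>2 / (1 - p) ^ (s + 1) + p / real s * (1 / (1 - p) ^ s)"
  have b0: "b k \<ge> 0" for k unfolding b_def using assms by simp
  have a0: "a k \<ge> 0" for k unfolding a_def using assms by simp
  have ab: "a k \<le> b k" if kge: "k \<ge> 1" for k
  proof -
    obtain i where ki: "k = Suc i" using kge by (cases k) auto
    have f1: "fact (k + s) = real (i + r + 2) * (real (i + r + 1) * fact (i + r))"
      unfolding ki sr by (simp add: fact_Suc algebra_simps)
    have f2: "fact k = real (Suc i) * fact i" unfolding ki by (simp add: fact_Suc)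
    have ch: "real ((k + s) choose k) = fact (k + s) / (fact k * fact s)"
      by (subst binomial_fact) (auto simp: sr)
    have ar: "a k = (real k)\<^sup>2 / (real (i + r + 2))\<^sup>2 * (real (i + r + 2) * (real (i + r + 1) * fact (i + r))
        / (real k * (fact i * fact s))) * p ^ k"
      unfolding a_def ch f1 f2 by (simp add: ki sr)
    have br: "b k = real k * fact (i + r) / (fact i * fact s) * p ^ k"
      unfolding b_def ki sr by simp
    have gen: "x\<^sup>2 / y\<^sup>2 * (y * (z * F) / (x * G)) * P = z / y * (x * F / G * P)"
      if "x > 0" "y > 0" "G > 0" for x y z F G P :: real
      using that by (simp add: field_simps power2_eq_square)
    have "a k = real (i + r + 1) / real (i + r + 2) * b k"
      unfolding ar br by (rule gen) (auto simp: ki)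
    also have "\<dots> \<le> 1 * b k"
      by (rule mult_right_mono) (auto intro: b0)
    finally show ?thesis by simp
  qed
  define A where "A = (\<lambda>j::nat. fact (j + r) / (fact j * fact r) * p ^ j)"
  define B where "B = (\<lambda>j::nat. fact (j + Suc r) / (fact j * fact (Suc r)) * p ^ j)"
  define C where "C = (\<lambda>j::nat. real j * fact (j + r) / (fact j * fact (Suc r)) * p ^ (Suc j))"
  have SA: "A sums (1 / (1 - p) ^ s)" unfolding A_def sr using NB[of p r] assms by simp
  have SB: "B sums (1 / (1 - p) ^ (s + 1))" unfolding B_def sr using NB[of p "Suc r"] assms by simp
  have CB: "(\<lambda>i. C (Suc i)) = (\<lambda>i. p\<^sup>2 * B i)"
  proof
    fix i
    have g: "real (Suc i) * X / (real (Suc i) * Fi * Fr) * p ^ Suc (Suc i) = p\<^sup>2 * (X / (Fi * Fr) * p ^ i)"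
      for X Fi Fr :: real
    proof -
      have "real (Suc i) * X / (real (Suc i) * Fi * Fr) = X / (Fi * Fr)"
        by (simp only: mult.assoc) (rule mult_divide_mult_cancel_left, simp)
      then show ?thesis by (simp add: power2_eq_square)
    qed
    have e1: "fact (Suc i) = (real (Suc i) * fact i :: real)" by (rule fact_Suc)
    have e2: "Suc i + r = i + Suc r" by simp
    show "C (Suc i) = p\<^sup>2 * B i"
      unfolding C_def B_def e1 e2 using g[of "fact (i + Suc r)" "fact i" "fact (Suc r)"]
      by (simp only: mult.assoc)
  qed
  have "(\<lambda>i. C (Suc i)) sums (p\<^sup>2 * (1 / (1 - p) ^ (s + 1)))"
    unfolding CB by (rule sums_mult[OF SB])
  hence SC: "C sums (p\<^sup>2 * (1 / (1 - p) ^ (s + 1)))"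
    by (subst (asm) sums_Suc_iff) (simp add: C_def)
  have bAC: "b (Suc j) = p / real s * A j + C j" for j
    unfolding b_def A_def C_def sr by (simp add: fact_Suc algebra_simps add_divide_distrib)
  have "(\<lambda>j. b (Suc j)) sums T"
    unfolding bAC T_def using sums_add[OF sums_mult[OF SA, of "p / real s"] SC] by (simp add: add.commute)
  hence "((\<lambda>j. b (Suc j)) has_sum T) UNIV"
    by (rule sums_nonneg_imp_has_sum) (rule b0)
  hence Hb: "(b has_sum T) {1..}"
  proof -
    assume h: "((\<lambda>j. b (Suc j)) has_sum T) UNIV"
    have "Suc ` UNIV = {1..}" using Suc_le_D by (auto simp: image_iff)
    moreover have "((b \<circ> Suc) has_sum T) UNIV" using h by (simp add: comp_def)
    ultimately show ?thesis using has_sum_reindex[of Suc UNIV b T] by simp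
  qed
  have sbJ: "b summable_on J" using summable_on_subset_banach[OF has_sum_imp_summable[OF Hb] assms(1)] .
  have sbN: "b summable_on ({1..} - J)"
    by (rule summable_on_subset_banach[OF has_sum_imp_summable[OF Hb] Diff_subset])
  have saN: "a summable_on ({1..} - J)"
    by (rule summable_on_comparison_test[OF sbN]) (auto intro: ab a0)
  have "infsum a ({1..} - J) \<le> infsum b ({1..} - J)"
    by (rule infsum_mono[OF saN sbN]) (auto intro: ab)
  also have "infsum b ({1..} - J) = T - infsum b J"
  proof -
    have "infsum b (({1..} - J) \<union> J) = infsum b ({1..} - J) + infsum b J"
      by (rule infsum_Un_disjoint[OF sbN sbJ]) auto
    moreover have "({1..} - J) \<union> J = {1..}" using assms(1) by auto
    ultimately show ?thesis using infsumI[OF Hb] by simp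
  qed
  finally have key: "infsum a ({1..} - J) \<le> T - infsum b J" .
  have pos: "(1 - p) ^ s / p\<^sup>2 \<ge> 0" using assms by simp
  have "h_J J s p = (1 - p) ^ s / p\<^sup>2 * infsum a ({1..} - J)"
    unfolding h_J_def a_def by simp
  also have "\<dots> \<le> (1 - p) ^ s / p\<^sup>2 * (T - infsum b J)"
    by (rule mult_left_mono[OF key pos])
  also have "\<dots> = h0_J J s p" unfolding h0_J_def T_def b_def by simp
  finally show ?thesis .
qed

end
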